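(* Let $n\ge1$, $b_i,B_i,d_i\ge0$ ($1\le i\le n$), $\theta_{i,j}\ge0$ ($i\ne j$), such that the directed graph on $\{1,\dots,n\}$ with edge set $\{(i,j):i\ne j,\ \theta_{i,j}>0\}$ is strongly connected, all eigenvalues of the matrix $A$ (defined in the context) have negative real parts, and $B=(B_1,\dots,B_n)\neq0$. Then there exist $v\in\mathbb{R}^n$ with positive coordinates, $c>0$ and $R\ge0$ such that $$v\cdot(Ax+B)<-c\,(v\cdot x+1)$$ for every $x\in\mathbb{R}_+^n$ with $\|x\|_1\ge R$.
   Context: $A\in\mathcal{M}_n(\mathbb{R})$ has entries $A_{i,i}=b_i-d_i-\sum_{j\ne i}\theta_{i,j}$ and $A_{i,j}=\theta_{j,i}$ for $i\ne j$; $\cdot$ is the usual scalar product. *)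

theory Defs
  imports "Jordan_Normal_Form.Char_Poly"
begin

text \<open>Vertices are indexed by 0..<n (paper: 1..n).  The matrix A of the paper:
  A(i,i) = b i - d i - sum over j ~= i of theta i j,  A(i,j) = theta j i for i ~= j.\<close>
definition matA :: "nat \<Rightarrow> (nat \<Rightarrow> real) \<Rightarrow> (nat \<Rightarrow> real) \<Rightarrow> (nat \<Rightarrow> nat \<Rightarrow> real) \<Rightarrow> real mat" where
  "matA n b d \<theta> = mat n n (\<lambda>(i,j). if i = j then b i - d i - (\<Sum>k\<in>{0..<n} - {i}. \<theta> i k) else \<theta> j i)"

definition edges :: "nat \<Rightarrow> (nat \<Rightarrow> nat \<Rightarrow> real) \<Rightarrow> (nat \<times> nat) set" where
  "edges n \<theta> = {(i,j). i < n \<and> j < n \<and> i \<noteq> j \<and> \<theta> i j > 0}"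

definition strongly_connected :: "nat \<Rightarrow> (nat \<times> nat) set \<Rightarrow> bool" where
  "strongly_connected n E \<longleftrightarrow> (\<forall>i<n. \<forall>j<n. (i,j) \<in> E\<^sup>*)"

end

theory Submission
  imports Defs "Jordan_Normal_Form.Spectral_Radius"
begin

lemma smult_mat_vec_assoc:
  fixes A :: "'a :: comm_ring_1 mat"
  assumes "A \<in> carrier_mat nr nc" "v \<in> carrier_vec nc"
  shows "(k \<cdot>\<^sub>m A) *\<^sub>v v = k \<cdot>\<^sub>v (A *\<^sub>v v)"
  using assms by (intro eq_vecI) (auto simp: scalar_prod_def sum_distrib_left mult.assoc)

lemma ev_shift:
  fixes M :: "complex mat"
  assumes M: "M \<in> carrier_mat n n" and b: "\<beta> \<noteq> 0"
    and ev: "eigenvalue (\<alpha> \<cdot>\<^sub>m 1\<^sub>m n + \<beta> \<cdot>\<^sub>m M) l"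
  shows "eigenvalue M ((l - \<alpha>) / \<beta>)"
proof -
  from ev obtain v where v: "v \<in> carrier_vec n" "v \<noteq> 0\<^sub>v n"
    and eq: "(\<alpha> \<cdot>\<^sub>m 1\<^sub>m n + \<beta> \<cdot>\<^sub>m M) *\<^sub>v v = l \<cdot>\<^sub>v v"
    unfolding eigenvalue_def eigenvector_def using M by auto
  have "(\<alpha> \<cdot>\<^sub>m 1\<^sub>m n + \<beta> \<cdot>\<^sub>m M) *\<^sub>v v = \<alpha> \<cdot>\<^sub>v v + \<beta> \<cdot>\<^sub>v (M *\<^sub>v v)"
    using M v by (simp add: add_mult_distrib_mat_vec[of _ n n] smult_mat_vec_assoc[of _ n n])
  with eq have eq2: "\<alpha> \<cdot>\<^sub>v v + \<beta> \<cdot>\<^sub>v (M *\<^sub>v v) = l \<cdot>\<^sub>v v" by simp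
  have "M *\<^sub>v v = ((l - \<alpha>) / \<beta>) \<cdot>\<^sub>v v"
  proof (rule eq_vecI)
    fix i assume i: "i < dim_vec (((l - \<alpha>) / \<beta>) \<cdot>\<^sub>v v)"
    hence i': "i < n" using v by auto
    from arg_cong[OF eq2, of "\<lambda>w. w $ i"] i' M v
    have "\<alpha> * v $ i + \<beta> * (M *\<^sub>v v) $ i = l * v $ i" by simp
    then show "(M *\<^sub>v v) $ i = (((l - \<alpha>) / \<beta>) \<cdot>\<^sub>v v) $ i"
      using i' v b by (simp add: field_simps)
  qed (use M v in auto)
  then show ?thesis unfolding eigenvalue_def eigenvector_def using M v by auto
qed

lemma pow_smult_mat:
  fixes P :: "'a :: comm_ring_1 mat"
  assumes P: "P \<in> carrier_mat n n"
  shows "(a \<cdot>\<^sub>m P) ^\<^sub>m k = (a ^ k) \<cdot>\<^sub>m (P ^\<^sub>m k)"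
proof (induction k)
  case 0
  then show ?case using P by (auto intro!: eq_matI)
next
  case (Suc k)
  have "(a \<cdot>\<^sub>m P) ^\<^sub>m Suc k = ((a ^ k) \<cdot>\<^sub>m (P ^\<^sub>m k)) * (a \<cdot>\<^sub>m P)"
    using Suc by simp
  also have "\<dots> = (a ^ k) \<cdot>\<^sub>m ((P ^\<^sub>m k) * (a \<cdot>\<^sub>m P))"
    using P by (simp add: mult_smult_assoc_mat[of _ n n _ n])
  also have "\<dots> = (a ^ k) \<cdot>\<^sub>m (a \<cdot>\<^sub>m ((P ^\<^sub>m k) * P))"
    using P by (simp add: mult_smult_distrib[of _ n n _ n])
  also have "\<dots> = (a ^ Suc k) \<cdot>\<^sub>m (P ^\<^sub>m Suc k)"
    using P by (auto intro!: eq_matI simp: mult.assoc)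
  finally show ?case .
qed

lemma pow_nonneg_mat:
  fixes P :: "real mat"
  assumes P: "P \<in> carrier_mat n n" and nn: "\<And>i j. i < n \<Longrightarrow> j < n \<Longrightarrow> P $$ (i,j) \<ge> 0"
  shows "i < n \<Longrightarrow> j < n \<Longrightarrow> (P ^\<^sub>m k) $$ (i,j) \<ge> 0"
proof (induction k arbitrary: i j)
  case 0
  then show ?case using P by auto
next
  case (Suc k)
  have "(P ^\<^sub>m Suc k) $$ (i,j) = (\<Sum>l = 0..<n. (P ^\<^sub>m k) $$ (i,l) * P $$ (l,j))"
    using P Suc.prems by (simp add: scalar_prod_def)
  also have "\<dots> \<ge> 0" using Suc.IH[OF Suc.prems(1)] nn Suc.prems
    by (intro sum_nonneg mult_nonneg_nonneg) auto
  finally show ?case .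
qed

lemma decay:
  fixes A :: "real mat"
  assumes A: "A \<in> carrier_mat n n" and n: "n > 0"
   and hur: "\<forall>\<mu>. eigenvalue (map_mat complex_of_real A) \<mu> \<longrightarrow> Re \<mu> < 0"
   and off: "\<forall>i<n. \<forall>j<n. i \<noteq> j \<longrightarrow> A $$ (i,j) \<ge> 0"
  shows "\<exists>s>0. \<exists>c r. 0 < r \<and> r < 1 \<and>
     (\<forall>i<n. \<forall>j<n. (1\<^sub>m n + (1/s) \<cdot>\<^sub>m A) $$ (i,j) \<ge> 0) \<and>
     (\<forall>k. \<forall>i<n. \<forall>j<n. \<bar>((1\<^sub>m n + (1/s) \<cdot>\<^sub>m A) ^\<^sub>m k) $$ (i,j)\<bar> \<le> c * r^k)"
proof -
  define Ac where "Ac = map_mat complex_of_real A"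
  have Ac: "Ac \<in> carrier_mat n n" using A unfolding Ac_def by auto
  define S where "S = spectrum Ac"
  have finS: "finite S" unfolding S_def using card_finite_spectrum[OF Ac] by auto
  have reS: "Re \<mu> < 0" if "\<mu> \<in> S" for \<mu>
    using that hur unfolding S_def spectrum_def Ac_def by auto
  define s where "s = 1 + (\<Sum>\<mu>\<in>S. (cmod \<mu>)^2 / (- Re \<mu>)) + (\<Sum>i<n. \<bar>A $$ (i,i)\<bar>)"
  have dnn: "(cmod \<mu>)^2 / (- Re \<mu>) \<ge> 0" if "\<mu> \<in> S" for \<mu>
    using reS[OF that] by (intro divide_nonneg_pos) auto
  have nn1: "(\<Sum>\<mu>\<in>S. (cmod \<mu>)^2 / (- Re \<mu>)) \<ge> 0"
    using dnn by (intro sum_nonneg) auto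
  have nn2: "(\<Sum>i<n. \<bar>A $$ (i,i)\<bar>) \<ge> 0" by (intro sum_nonneg) auto
  have s1: "s \<ge> 1" unfolding s_def using nn1 nn2 by linarith
  have t1: "(cmod \<mu>)^2 / (- Re \<mu>) < s" if "\<mu> \<in> S" for \<mu>
  proof -
    have "(cmod \<mu>)^2 / (- Re \<mu>) \<le> (\<Sum>\<mu>\<in>S. (cmod \<mu>)^2 / (- Re \<mu>))"
      using dnn that finS by (intro member_le_sum) auto
    then show ?thesis unfolding s_def using nn2 by linarith
  qed
  have t2: "\<bar>A $$ (i,i)\<bar> < s" if "i < n" for i
  proof -
    have "\<bar>A $$ (i,i)\<bar> \<le> (\<Sum>i<n. \<bar>A $$ (i,i)\<bar>)"
      using that by (intro member_le_sum) auto
    then show ?thesis unfolding s_def using nn1 by linarith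
  qed
  have lt1: "cmod (1 + \<mu>/of_real s) < 1" if "\<mu> \<in> S" for \<mu>
  proof -
    define a where "a = Re \<mu>"
    define b where "b = Im \<mu>"
    have a: "a < 0" using reS[OF that] a_def by simp
    have "(cmod \<mu>)^2 < s * (- a)"
    proof -
      have "(cmod \<mu>)^2 / (- a) < s" using t1[OF that] unfolding a_def .
      moreover have "0 < - a" using a by simp
      ultimately show ?thesis using pos_divide_less_eq[of "- a" "(cmod \<mu>)^2" s] by blast
    qed
    hence ab: "a^2 + b^2 < s * (- a)" unfolding a_def b_def by (simp add: cmod_power2)
    have "(cmod (1 + \<mu>/of_real s))^2 = (1 + a/s)^2 + (b/s)^2"
      unfolding a_def b_def by (simp add: cmod_power2 Re_divide_of_real Im_divide_of_real)
    also have "\<dots> = 1 + (2*s*a + a^2 + b^2) / s^2" using s1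
      by (simp add: field_simps power2_eq_square)
    also have "\<dots> < 1"
    proof -
      have "s * a < 0" using a s1 by (simp add: mult_pos_neg)
      then have "2*s*a + a^2 + b^2 < 0" using ab by linarith
      moreover have "s^2 > 0" using s1 by simp
      ultimately show ?thesis by (simp add: divide_neg_pos)
    qed
    finally have "(cmod (1 + \<mu>/of_real s))^2 < 1^2" by simp
    then show ?thesis by (rule power_less_imp_less_base) simp
  qed
  define m where "m = Max (insert 0 ((\<lambda>\<mu>. cmod (1 + \<mu>/of_real s)) ` S))"
  have m0: "m \<ge> 0" unfolding m_def using finS by simp
  have m1: "m < 1" unfolding m_def using finS lt1 by (simp add: Max_less_iff)
  have mge: "cmod (1 + \<mu>/of_real s) \<le> m" if "\<mu> \<in> S" for \<mu>
    unfolding m_def using finS that by (intro Max_ge) auto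
  define r where "r = (1 + m) / 2"
  have r0: "r > 0" and r1: "r < 1" and mr: "m < r" using m0 m1 unfolding r_def by auto
  define P where "P = 1\<^sub>m n + (1/s) \<cdot>\<^sub>m A"
  have P: "P \<in> carrier_mat n n" unfolding P_def using A by auto
  have Pnn: "\<forall>i<n. \<forall>j<n. P $$ (i,j) \<ge> 0"
  proof (intro allI impI)
    fix i j assume i: "i < n" and j: "j < n"
    show "P $$ (i,j) \<ge> 0"
    proof (cases "i = j")
      case True
      have "\<bar>A $$ (i,i)\<bar> / s \<le> 1" using t2[OF i] s1 by simp
      moreover have "\<bar>A $$ (i,i) / s\<bar> = \<bar>A $$ (i,i)\<bar> / s" using s1 by simp
      ultimately have "\<bar>A $$ (i,i) / s\<bar> \<le> 1" by linarith
      then have "1 + A $$ (i,i) / s \<ge> 0" using abs_le_D2 by fastforce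
      then show ?thesis unfolding P_def using i j A True by simp
    next
      case False
      then show ?thesis unfolding P_def using i j A off s1 by simp
    qed
  qed
  define Q where "Q = map_mat complex_of_real ((1/r) \<cdot>\<^sub>m P)"
  have Q: "Q \<in> carrier_mat n n" unfolding Q_def using P by auto
  have Qeq: "Q = complex_of_real (1/r) \<cdot>\<^sub>m 1\<^sub>m n + complex_of_real (1/(r*s)) \<cdot>\<^sub>m Ac"
  proof (rule eq_matI)
    fix i j assume "i < dim_row (complex_of_real (1/r) \<cdot>\<^sub>m 1\<^sub>m n + complex_of_real (1/(r*s)) \<cdot>\<^sub>m Ac)"
      and "j < dim_col (complex_of_real (1/r) \<cdot>\<^sub>m 1\<^sub>m n + complex_of_real (1/(r*s)) \<cdot>\<^sub>m Ac)"
    then have i: "i < n" and j: "j < n" using Ac by auto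
    have e: "(1/r) * ((if i = j then 1 else 0) + (1/s) * A $$ (i,j)) =
        (1/r) * (if i = j then 1 else 0) + (1/(r*s)) * A $$ (i,j)"
      by (simp add: distrib_left)
    have "Q $$ (i,j) = complex_of_real ((1/r) * ((if i = j then 1 else 0) + (1/s) * A $$ (i,j)))"
      unfolding Q_def P_def using A i j by simp
    also have "\<dots> = complex_of_real ((1/r) * (if i = j then 1 else 0) + (1/(r*s)) * A $$ (i,j))"
      using e by simp
    also have "\<dots> = (complex_of_real (1/r) \<cdot>\<^sub>m 1\<^sub>m n + complex_of_real (1/(r*s)) \<cdot>\<^sub>m Ac) $$ (i,j)"
      unfolding Ac_def using A i j by (simp del: of_real_mult of_real_add of_real_divide add: of_real_mult[symmetric] of_real_add[symmetric])
    finally show "Q $$ (i,j) = (complex_of_real (1/r) \<cdot>\<^sub>m 1\<^sub>m n + complex_of_real (1/(r*s)) \<cdot>\<^sub>m Ac) $$ (i,j)" .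
  qed (use Q Ac in auto)
  have evQ: "cmod l < 1" if "eigenvalue Q l" for l
  proof -
    have "complex_of_real (1/(r*s)) \<noteq> 0" using r0 s1 by simp
    from ev_shift[OF Ac this, of "complex_of_real (1/r)" l] that Qeq
    have "eigenvalue Ac ((l - complex_of_real (1/r)) / complex_of_real (1/(r*s)))" by simp
    then have mu: "(l - complex_of_real (1/r)) / complex_of_real (1/(r*s)) \<in> S"
      unfolding S_def spectrum_def by simp
    define \<mu> where "\<mu> = (l - complex_of_real (1/r)) / complex_of_real (1/(r*s))"
    have rz: "complex_of_real r \<noteq> 0" and sz: "complex_of_real s \<noteq> 0" using r0 s1 by auto
    have "\<mu> = (l - 1 / complex_of_real r) * (complex_of_real r * complex_of_real s)"
      unfolding \<mu>_def by (simp add: divide_inverse)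
    then have "\<mu> / of_real s = l * of_real r - 1" using rz sz by (simp add: field_simps)
    then have "l = (1 + \<mu> / of_real s) / of_real r" using rz by simp
    then have "cmod l = cmod (1 + \<mu> / of_real s) / r" using r0 by (simp add: norm_divide)
    also have "\<dots> \<le> m / r" using mge[OF mu[folded \<mu>_def]] r0 by (simp add: divide_right_mono)
    also have "\<dots> < 1" using mr r0 by simp
    finally show ?thesis .
  qed
  have "spectral_radius Q \<in> norm ` spectrum Q" by (rule spectral_radius_mem_max(1)[OF Q n])
  then have "spectral_radius Q < 1" using evQ unfolding spectrum_def by auto
  from spectral_radius_jnf_norm_bound_less_1_upper_triangular[OF Q this]
  obtain c where c: "\<And>k. norm_bound (Q ^\<^sub>m k) c" by auto
  have bound: "\<bar>(P ^\<^sub>m k) $$ (i,j)\<bar> \<le> c * r^k" if i: "i < n" and j: "j < n" for k i j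
  proof -
    have Qk: "Q ^\<^sub>m k = map_mat complex_of_real (((1/r) ^ k) \<cdot>\<^sub>m (P ^\<^sub>m k))"
    proof -
      have "(1/r) \<cdot>\<^sub>m P \<in> carrier_mat n n" using P by simp
      from of_real_hom.mat_hom_pow[OF this, of k]
      have "map_mat complex_of_real (((1/r) \<cdot>\<^sub>m P) ^\<^sub>m k) = (map_mat complex_of_real ((1/r) \<cdot>\<^sub>m P)) ^\<^sub>m k" .
      then show ?thesis unfolding Q_def pow_smult_mat[OF P, of "1/r" k] by simp
    qed
    have "norm ((Q ^\<^sub>m k) $$ (i,j)) \<le> c" using c[of k] i j Q unfolding norm_bound_def by simp
    then have "(1/r)^k * \<bar>(P ^\<^sub>m k) $$ (i,j)\<bar> \<le> c" unfolding Qk using i j P r0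
      by (simp add: abs_mult norm_mult norm_power norm_divide)
    then show ?thesis using r0 by (simp add: field_simps)
  qed
  show ?thesis
    by (rule exI[of _ s], use s1 in simp, rule exI[of _ c], rule exI[of _ r])
      (use r0 r1 Pnn bound in \<open>simp add: P_def\<close>)
qed

lemma exists_v:
  fixes A :: "real mat"
  assumes A: "A \<in> carrier_mat n n" and n: "n > 0"
   and hur: "\<forall>\<mu>. eigenvalue (map_mat complex_of_real A) \<mu> \<longrightarrow> Re \<mu> < 0"
   and off: "\<forall>i<n. \<forall>j<n. i \<noteq> j \<longrightarrow> A $$ (i,j) \<ge> 0"
  shows "\<exists>v \<delta>. \<delta> > 0 \<and> dim_vec v = n \<and> (\<forall>j<n. v $ j \<ge> 1) \<and>
     (\<forall>j<n. (\<Sum>l<n. v $ l * A $$ (l,j)) \<le> - \<delta>)"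
proof -
  from decay[OF A n hur off] obtain s c r where s: "s > 0" and r0: "0 < r" and r1: "r < 1"
    and Pnn: "\<forall>i<n. \<forall>j<n. (1\<^sub>m n + (1/s) \<cdot>\<^sub>m A) $$ (i,j) \<ge> 0"
    and bnd: "\<forall>k. \<forall>i<n. \<forall>j<n. \<bar>((1\<^sub>m n + (1/s) \<cdot>\<^sub>m A) ^\<^sub>m k) $$ (i,j)\<bar> \<le> c * r^k"
    by blast
  define P where "P = 1\<^sub>m n + (1/s) \<cdot>\<^sub>m A"
  have P: "P \<in> carrier_mat n n" unfolding P_def using A by auto
  have Pij: "P $$ (i,j) = (if i = j then 1 else 0) + A $$ (i,j) / s" if "i < n" "j < n" for i j
    unfolding P_def using that A by simp
  define Pk where "Pk k i j = (P ^\<^sub>m k) $$ (i,j)" for k i j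
  have Pknn: "Pk k i j \<ge> 0" if "i < n" "j < n" for k i j
    unfolding Pk_def using pow_nonneg_mat[OF P, of i j k] Pnn that unfolding P_def by blast
  have Pk0: "Pk 0 i j = (if i = j then 1 else 0)" if "i < n" "j < n" for i j
    unfolding Pk_def using P that by simp
  have PkSuc: "Pk (Suc k) i j = (\<Sum>l<n. Pk k i l * P $$ (l,j))" if "i < n" "j < n" for k i j
    unfolding Pk_def using P that by (simp add: scalar_prod_def atLeast0LessThan)
  define y where "y = 1 / (2 * real n * (\<bar>c\<bar> + 1))"
  have y0: "y > 0" unfolding y_def using n by simp
  obtain K0 where K0: "r ^ K0 < y" using real_arch_pow_inv[OF y0 r1] by blast
  define K where "K = Suc K0"
  have PkK: "Pk K i j \<le> 1 / (2 * real n)" if "i < n" "j < n" for i j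
  proof -
    have "\<bar>Pk K i j\<bar> \<le> c * r ^ K" using bnd that unfolding Pk_def P_def by blast
    then have "Pk K i j \<le> c * r ^ K" by linarith
    also have "\<dots> \<le> \<bar>c\<bar> * r ^ K" using r0 by (intro mult_right_mono) auto
    also have "\<dots> \<le> \<bar>c\<bar> * r ^ K0" unfolding K_def using r0 r1
      by (intro mult_left_mono) (auto intro: power_decreasing)
    also have "\<dots> \<le> \<bar>c\<bar> * y" using K0 by (intro mult_left_mono) auto
    also have "\<dots> = (\<bar>c\<bar> / (\<bar>c\<bar> + 1)) * (1 / (2 * real n))" unfolding y_def by simp
    also have "\<dots> \<le> 1 * (1 / (2 * real n))" by (intro mult_right_mono) auto
    also have "\<dots> = 1 / (2 * real n)" by simp
    finally show ?thesis .
  qed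
  define v where "v = vec n (\<lambda>j. \<Sum>k<K. \<Sum>i<n. Pk k i j)"
  have vj: "v $ j = (\<Sum>k<K. \<Sum>i<n. Pk k i j)" if "j < n" for j
    unfolding v_def using that by simp
  have v1: "v $ j \<ge> 1" if j: "j < n" for j
  proof -
    have "(\<Sum>i<n. Pk 0 i j) = 1" using j Pk0 by (simp add: sum.delta)
    moreover have "(\<Sum>i<n. Pk 0 i j) \<le> (\<Sum>k<K. \<Sum>i<n. Pk k i j)"
      using Pknn j unfolding K_def by (intro member_le_sum) (auto intro: sum_nonneg)
    ultimately show ?thesis using vj[OF j] by simp
  qed
  have key: "(\<Sum>l<n. v $ l * A $$ (l,j)) \<le> - (s / 2)" if j: "j < n" for j
  proof -
    have "(\<Sum>l<n. v $ l * P $$ (l,j)) = (\<Sum>l<n. (if l = j then v $ l else 0) + v $ l * A $$ (l,j) / s)"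
      using Pij j by (intro sum.cong) (auto simp: distrib_left)
    also have "\<dots> = v $ j + (\<Sum>l<n. v $ l * A $$ (l,j)) / s"
      using j by (simp add: sum.distrib sum_divide_distrib)
    finally have e1: "(\<Sum>l<n. v $ l * P $$ (l,j)) = v $ j + (\<Sum>l<n. v $ l * A $$ (l,j)) / s" .
    have "(\<Sum>l<n. v $ l * P $$ (l,j)) = (\<Sum>l<n. \<Sum>k<K. \<Sum>i<n. Pk k i l * P $$ (l,j))"
      using vj by (simp add: sum_distrib_right)
    also have "\<dots> = (\<Sum>k<K. \<Sum>i<n. \<Sum>l<n. Pk k i l * P $$ (l,j))"
      by (subst sum.swap) (subst (2) sum.swap, rule refl)
    also have "\<dots> = (\<Sum>k<K. \<Sum>i<n. Pk (Suc k) i j)"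
      using PkSuc j by simp
    finally have e2: "(\<Sum>l<n. v $ l * P $$ (l,j)) = (\<Sum>k<K. \<Sum>i<n. Pk (Suc k) i j)" .
    have "(\<Sum>k<K. \<Sum>i<n. Pk (Suc k) i j) - v $ j
        = (\<Sum>k<K. (\<Sum>i<n. Pk (Suc k) i j) - (\<Sum>i<n. Pk k i j))"
      using vj[OF j] by (simp add: sum_subtractf)
    also have "\<dots> = (\<Sum>i<n. Pk K i j) - (\<Sum>i<n. Pk 0 i j)"
      by (rule sum_lessThan_telescope)
    also have "(\<Sum>i<n. Pk 0 i j) = 1" using j Pk0 by (simp add: sum.delta)
    finally have e3: "(\<Sum>k<K. \<Sum>i<n. Pk (Suc k) i j) - v $ j = (\<Sum>i<n. Pk K i j) - 1" .
    have "(\<Sum>i<n. Pk K i j) \<le> (\<Sum>i<(n::nat). 1 / (2 * real n))"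
      using PkK j by (intro sum_mono) auto
    also have "\<dots> = 1/2" using n by simp
    finally have "(\<Sum>i<n. Pk K i j) \<le> 1/2" .
    with e1 e2 e3 have "(\<Sum>l<n. v $ l * A $$ (l,j)) / s \<le> - 1/2" by linarith
    then show ?thesis using s by (simp add: divide_le_eq)
  qed
  show ?thesis
    by (rule exI[of _ v], rule exI[of _ "s/2"]) (use s v1 key in \<open>auto simp: v_def\<close>)
qed

theorem lemma1:
  fixes n :: nat and b B d :: "nat \<Rightarrow> real" and \<theta> :: "nat \<Rightarrow> nat \<Rightarrow> real"
  assumes "n \<ge> 1"
    and "\<forall>i<n. b i \<ge> 0 \<and> B i \<ge> 0 \<and> d i \<ge> 0"
    and "\<forall>i<n. \<forall>j<n. i \<noteq> j \<longrightarrow> \<theta> i j \<ge> 0"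
    and "strongly_connected n (edges n \<theta>)"
    and "\<forall>\<mu>. eigenvalue (map_mat complex_of_real (matA n b d \<theta>)) \<mu> \<longrightarrow> Re \<mu> < 0"
    and "vec n B \<noteq> 0\<^sub>v n"
  shows "\<exists>v :: real vec. dim_vec v = n \<and> (\<forall>i<n. v $ i > 0) \<and>
           (\<exists>c > 0. \<exists>R \<ge> 0. \<forall>x :: real vec.
              dim_vec x = n \<and> (\<forall>i<n. x $ i \<ge> 0) \<and> (\<Sum>i<n. \<bar>x $ i\<bar>) \<ge> R \<longrightarrow>
              v \<bullet> (matA n b d \<theta> *\<^sub>v x + vec n B) < - c * (v \<bullet> x + 1))"
proof -
  define A where "A = matA n b d \<theta>"
  have A: "A \<in> carrier_mat n n" unfolding A_def matA_def by simp
  have n: "n > 0" using assms(1) by simp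
  have Aij: "A $$ (i,j) = \<theta> j i" if "i < n" "j < n" "i \<noteq> j" for i j
    unfolding A_def matA_def using that by simp
  have off: "\<forall>i<n. \<forall>j<n. i \<noteq> j \<longrightarrow> A $$ (i,j) \<ge> 0"
    using Aij assms(3) by auto
  from exists_v[OF A n assms(5)[folded A_def] off] obtain v \<delta> where
    d0: "\<delta> > 0" and dv: "dim_vec v = n" and v1: "\<forall>j<n. v $ j \<ge> 1"
    and g: "\<forall>j<n. (\<Sum>l<n. v $ l * A $$ (l,j)) \<le> - \<delta>" by blast
  define V where "V = (\<Sum>j<n. v $ j)"
  have vV: "v $ i \<le> V" if "i < n" for i
    unfolding V_def using that v1 by (intro member_le_sum) (auto intro: order.trans[OF zero_le_one])
  have V1: "V \<ge> 1" using vV[OF n] v1 n by force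
  define VB where "VB = (\<Sum>i<n. v $ i * B i)"
  have VB0: "VB \<ge> 0" unfolding VB_def using v1 assms(2)
    by (intro sum_nonneg) (auto intro: mult_nonneg_nonneg order.trans[OF zero_le_one])
  define c where "c = \<delta> / (2 * V)"
  have c0: "c > 0" unfolding c_def using d0 V1 by simp
  define R where "R = 2 * (VB + c) / \<delta> + 1"
  have R0: "R \<ge> 0" unfolding R_def using VB0 c0 d0 by simp
  have vpos: "\<forall>i<n. 0 < v $ i" using v1 by (auto intro: less_le_trans[OF zero_less_one])
  have main: "\<forall>x :: real vec.
              dim_vec x = n \<and> (\<forall>i<n. x $ i \<ge> 0) \<and> (\<Sum>i<n. \<bar>x $ i\<bar>) \<ge> R \<longrightarrow>
              v \<bullet> (matA n b d \<theta> *\<^sub>v x + vec n B) < - c * (v \<bullet> x + 1)"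
  proof (intro allI impI)
    fix x :: "real vec"
    assume x: "dim_vec x = n \<and> (\<forall>i<n. 0 \<le> x $ i) \<and> R \<le> (\<Sum>i<n. \<bar>x $ i\<bar>)"
    define X where "X = (\<Sum>i<n. x $ i)"
    have xn: "dim_vec x = n" and xnn: "\<And>i. i < n \<Longrightarrow> x $ i \<ge> 0" using x by auto
    have "(\<Sum>i<n. \<bar>x $ i\<bar>) = X" unfolding X_def using xnn by (intro sum.cong) auto
    moreover have "R \<le> (\<Sum>i<n. \<bar>x $ i\<bar>)" using x by blast
    ultimately have XR: "X \<ge> R" by linarith
    have "v \<bullet> (matA n b d \<theta> *\<^sub>v x + vec n B) = (\<Sum>i<n. v $ i * ((\<Sum>j<n. A $$ (i,j) * x $ j) + B i))"
      unfolding A_def[symmetric] using A xn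
      by (simp add: scalar_prod_def atLeast0LessThan)
    also have "\<dots> = (\<Sum>i<n. \<Sum>j<n. v $ i * A $$ (i,j) * x $ j) + VB"
      unfolding VB_def by (simp add: distrib_left sum.distrib sum_distrib_left mult.assoc)
    also have "\<dots> = (\<Sum>j<n. x $ j * (\<Sum>i<n. v $ i * A $$ (i,j))) + VB"
    proof -
      have "(\<Sum>i<n. \<Sum>j<n. v $ i * A $$ (i,j) * x $ j) = (\<Sum>j<n. \<Sum>i<n. v $ i * A $$ (i,j) * x $ j)"
        by (rule sum.swap)
      also have "\<dots> = (\<Sum>j<n. x $ j * (\<Sum>i<n. v $ i * A $$ (i,j)))"
        by (simp add: sum_distrib_left mult_ac)
      finally show ?thesis by simp
    qed
    also have "\<dots> \<le> (\<Sum>j<n. x $ j * (- \<delta>)) + VB"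
      using g xnn by (intro add_right_mono sum_mono mult_left_mono) auto
    also have "\<dots> = - \<delta> * X + VB" unfolding X_def by (simp add: sum_distrib_left sum_negf mult_ac)
    also have "\<dots> < - (\<delta> / 2) * X - c"
    proof -
      have "X \<ge> 2 * (VB + c) / \<delta> + 1" using XR unfolding R_def .
      then have "\<delta> * X \<ge> \<delta> * (2 * (VB + c) / \<delta> + 1)" using d0 by (simp add: mult_left_mono)
      also have "\<delta> * (2 * (VB + c) / \<delta> + 1) = 2 * (VB + c) + \<delta>" using d0 by (simp add: field_simps)
      finally have h: "2 * (VB + c) + \<delta> \<le> \<delta> * X" .
      have "- (\<delta> * X) + VB < - (\<delta> * X) / 2 - c" using h d0 by (simp add: field_simps)
      then show ?thesis by (simp add: algebra_simps)
    qed
    also have "\<dots> \<le> - c * (v \<bullet> x + 1)"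
    proof -
      have "v \<bullet> x = (\<Sum>i<n. v $ i * x $ i)" using xn by (simp add: scalar_prod_def atLeast0LessThan)
      also have "\<dots> \<le> (\<Sum>i<n. V * x $ i)" using vV xnn by (intro sum_mono mult_right_mono) auto
      also have "\<dots> = V * X" unfolding X_def by (simp add: sum_distrib_left)
      finally have "v \<bullet> x \<le> V * X" .
      then have "c * (v \<bullet> x) \<le> c * (V * X)" using c0 by (simp add: mult_left_mono)
      also have "c * (V * X) = (\<delta> / 2) * X" unfolding c_def using V1 by (simp add: field_simps)
      finally show ?thesis by (simp add: algebra_simps)
    qed
    finally show "v \<bullet> (matA n b d \<theta> *\<^sub>v x + vec n B) < - c * (v \<bullet> x + 1)" .
  qed
  show ?thesis using dv vpos c0 R0 main by blast
qed

end
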